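(* Let $[a,b]$ be a bounded closed interval and let $A:L^2(a,b)\to L^2(a,b)$ be the integral operator $(Af)(x)=\int_a^b K(x,y)f(y)\,dy$ with a real, symmetric ($K(x,y)=K(y,x)$), square-integrable kernel $K$. Assume $A$ is injective, let $\{\psi_k\}_{k\ge1}$ be an orthonormal basis of $L^2(a,b)$ of eigenfunctions of $A$ with eigenvalues $\lambda_1>\lambda_2>\lambda_3>\cdots$, $\lambda_k\to0$. Let $\xi$ be a zero-mean Gaussian weak random variable in $L^2(a,b)$ with covariance operator $R_{\xi\xi}$, and for each $\epsilon>0$ let $\zeta=\zeta^{(\epsilon)}$ be a zero-mean Gaussian weak random variable uncorrelated with $\xi$ ($R_{\xi\zeta}=0$) and with covariance operator $R_{\zeta\zeta}=\epsilon^2N$, where $N$ is a fixed positive operator (independent of $\epsilon$) such that $R_{\zeta\zeta}^{-1}$ exists. Put $\eta=A\xi+\zeta$, $\rho_k^2=(R_{\xi\xi}\psi_k,\psi_k)$, $\nu_k^2=(N\psi_k,\psi_k)>0$ (no assumption is made that the components $(\xi,\psi_k)$, or $(\zeta,\psi_k)$, are mutually uncorrelated), and $$\mathcal I_\epsilon=\{k:\lambda_k\rho_k\ge\epsilon\nu_k\},\qquad \widehat B_\epsilon g=\sum_{k\in\mathcal I_\epsilon}\frac{(g,\psi_k)}{\lambda_k}\psi_k .$$ If $R_{\xi\xi}$ is of trace class and the set $\mathcal I_\epsilon$ is finite for every $\epsilon>0$, then $$\lim_{\epsilon\to0}\mathrm{E}\left\{\|\xi-\widehat B_\epsilon\eta\|^2\right\}=0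 .$$
   Context: A (Gaussian) weak random variable in the Hilbert space $L^2(a,b)$ is a linear map $v\mapsto(\xi,v)$ assigning to each $v\in L^2(a,b)$ a real (jointly Gaussian) random variable; it is determined by its mean element and its covariance operator $R_{\xi\xi}$, defined by $(R_{\xi\xi}u,v)=\mathrm{E}\{(\xi,u)(\xi,v)\}$ (zero mean case); $R_{\xi\zeta}$ is defined analogously with $\mathrm{E}\{(\xi,u)(\zeta,v)\}$. $(\cdot,\cdot)$ and $\|\cdot\|$ denote the inner product and norm of $L^2(a,b)$, and $\mathrm{E}$ denotes expectation. *)

theory Defs
  imports "HOL-Probability.Probability"
begin

text \<open>Elements of L2(a,b) are represented by real functions on the reals whose
restriction to [a,b] is Borel measurable and square integrable; all statements
about them are made up to equality almost everywhere on [a,b].\<close>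

definition L2 :: "real \<Rightarrow> real \<Rightarrow> (real \<Rightarrow> real) set" where
  "L2 a b = {f. f \<in> borel_measurable lborel \<and> set_integrable lborel {a..b} (\<lambda>x. (f x)\<^sup>2)}"

definition l2ip :: "real \<Rightarrow> real \<Rightarrow> (real \<Rightarrow> real) \<Rightarrow> (real \<Rightarrow> real) \<Rightarrow> real" where
  "l2ip a b f g = set_lebesgue_integral lborel {a..b} (\<lambda>x. f x * g x)"

definition ae_eq_on :: "real \<Rightarrow> real \<Rightarrow> (real \<Rightarrow> real) \<Rightarrow> (real \<Rightarrow> real) \<Rightarrow> bool" where
  "ae_eq_on a b f g \<longleftrightarrow> (AE x in lborel. x \<in> {a..b} \<longrightarrow> f x = g x)"

definition kernel_op :: "(real \<Rightarrow> real \<Rightarrow> real) \<Rightarrow> real \<Rightarrow> real \<Rightarrow> (real \<Rightarrow> real) \<Rightarrow> real \<Rightarrow> real" where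
  "kernel_op K a b f x = set_lebesgue_integral lborel {a..b} (\<lambda>y. K x y * f y)"

definition centered_gaussian :: "'a measure \<Rightarrow> ('a \<Rightarrow> real) \<Rightarrow> bool" where
  "centered_gaussian M X \<longleftrightarrow> X \<in> borel_measurable M \<and>
     ((AE \<omega> in M. X \<omega> = 0) \<or> (\<exists>\<sigma>>0. distributed M lborel X (normal_density 0 \<sigma>)))"

text \<open>A zero-mean Gaussian weak random variable in L2(a,b): a linear map
 v \<mapsto> (X,v) from L2(a,b) to random variables (equal a.s.), whose values
 are jointly Gaussian (by linearity: every value is centered Gaussian).\<close>
definition gaussian_weak_rv :: "'a measure \<Rightarrow> real \<Rightarrow> real \<Rightarrow> ((real \<Rightarrow> real) \<Rightarrow> 'a \<Rightarrow> real) \<Rightarrow> bool" where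
  "gaussian_weak_rv M a b X \<longleftrightarrow>
     (\<forall>v\<in>L2 a b. centered_gaussian M (X v)) \<and>
     (\<forall>u\<in>L2 a b. \<forall>v\<in>L2 a b. \<forall>c d::real.
        AE \<omega> in M. X (\<lambda>x. c * u x + d * v x) \<omega> = c * X u \<omega> + d * X v \<omega>)"

text \<open>E ||X||^2 for a weak random variable X, computed in the orthonormal basis psi:
 the trace of its covariance operator, sum_k E (X,psi_k)^2 (in [0,\<infinity>]).\<close>
definition mean_sq_norm :: "'a measure \<Rightarrow> (nat \<Rightarrow> real \<Rightarrow> real) \<Rightarrow> ((real \<Rightarrow> real) \<Rightarrow> 'a \<Rightarrow> real) \<Rightarrow> ennreal" where
  "mean_sq_norm M \<psi> X = (\<Sum>k. \<integral>\<^sup>+ \<omega>. ennreal ((X (\<psi> k) \<omega>)\<^sup>2) \<partial>M)"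

end

theory Submission imports Defs begin

lemma cg_sq_integrable:
  assumes "centered_gaussian M X"
  shows "integrable M (\<lambda>\<omega>. (X \<omega>)\<^sup>2)"
proof -
  have Xm[measurable]: "X \<in> borel_measurable M" using assms unfolding centered_gaussian_def by blast
  from assms consider "AE \<omega> in M. X \<omega> = 0" | \<sigma> where "\<sigma> > 0" "distributed M lborel X (normal_density 0 \<sigma>)"
    unfolding centered_gaussian_def by blast
  then show ?thesis
  proof cases
    case 1
    have "integrable M (\<lambda>\<omega>. (X \<omega>)\<^sup>2) = integrable M (\<lambda>\<omega>. 0::real)"
      by (rule integrable_cong_AE) (use 1 in \<open>auto elim: eventually_mono\<close>)
    then show ?thesis by simp
  next
    case 2
    have "integrable lborel (\<lambda>x. normal_density 0 \<sigma> x * (x - 0)^2)"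
      using 2(1) by (rule integrable_normal_moment)
    then have "integrable lborel (\<lambda>x. normal_density 0 \<sigma> x * x^2)" by simp
    then show ?thesis
      using distributed_integrable[OF 2(2), of "\<lambda>x. x^2"] by simp
  qed
qed

lemma sq_zero_AE:
  fixes X :: "'a \<Rightarrow> real"
  assumes "integrable M (\<lambda>\<omega>. (X \<omega>)\<^sup>2)" "integral\<^sup>L M (\<lambda>\<omega>. (X \<omega>)\<^sup>2) = 0"
  shows "AE \<omega> in M. X \<omega> = 0"
proof -
  have "AE \<omega> in M. (X \<omega>)\<^sup>2 = 0"
    using integral_nonneg_eq_0_iff_AE[OF assms(1)] assms(2) by simp
  then show ?thesis by (auto elim: eventually_mono)
qed

lemma L2_cong:
  assumes fm: "f \<in> borel_measurable lborel" and e: "ae_eq_on a b f g" and g: "g \<in> L2 a b"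
  shows "f \<in> L2 a b"
proof -
  have gm[measurable]: "g \<in> borel_measurable lborel" using g unfolding L2_def by blast
  note fm[measurable]
  have "integrable lborel (\<lambda>x. indicator {a..b} x *\<^sub>R (g x)\<^sup>2)"
    using g unfolding L2_def set_integrable_def by blast
  moreover have "integrable lborel (\<lambda>x. indicator {a..b} x *\<^sub>R (f x)\<^sup>2) =
       integrable lborel (\<lambda>x. indicator {a..b} x *\<^sub>R (g x)\<^sup>2)"
    by (rule integrable_cong_AE) (use e in \<open>auto simp: ae_eq_on_def indicator_def elim!: eventually_mono\<close>)
  ultimately show ?thesis unfolding L2_def set_integrable_def using fm by blast
qed

lemma zero_L2: "(\<lambda>x. 0) \<in> L2 a b"
  unfolding L2_def set_integrable_def by simp

lemma kop_meas:
  assumes K_meas: "(\<lambda>(x, y). K x y) \<in> borel_measurable lborel"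
    and f: "f \<in> borel_measurable lborel"
  shows "kernel_op K a b f \<in> borel_measurable lborel"
proof -
  have [measurable]: "(\<lambda>(x, y). K x y) \<in> borel_measurable (lborel \<Otimes>\<^sub>M lborel)"
    using K_meas by (simp add: lborel_prod)
  note f[measurable]
  show ?thesis unfolding kernel_op_def set_lebesgue_integral_def
    by measurable
qed


lemma sum_delta_helper:
  fixes g l :: "nat \<Rightarrow> real"
  assumes "finite S"
  shows "(\<Sum>k\<in>S. g k * (if k = j then 1 else 0) / l k) = (if j \<in> S then g j / l j else 0)"
proof -
  have "(\<Sum>k\<in>S. g k * (if k = j then 1 else 0) / l k) = (\<Sum>k\<in>S. if k = j then g j / l j else 0)"
    by (rule sum.cong) auto
  also have "\<dots> = (if j \<in> S then g j / l j else 0)" using assms by (simp add: sum.delta)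
  finally show ?thesis .
qed

theorem theorem2:
  fixes a b :: real
    and K :: "real \<Rightarrow> real \<Rightarrow> real"
    and \<psi> :: "nat \<Rightarrow> real \<Rightarrow> real"
    and lam :: "nat \<Rightarrow> real"
    and M :: "'a measure"
    and \<xi> :: "(real \<Rightarrow> real) \<Rightarrow> 'a \<Rightarrow> real"
    and \<zeta> :: "real \<Rightarrow> (real \<Rightarrow> real) \<Rightarrow> 'a \<Rightarrow> real"
    and R N :: "(real \<Rightarrow> real) \<Rightarrow> (real \<Rightarrow> real)"
  assumes ab: "a < b"
    and K_meas: "(\<lambda>(x, y). K x y) \<in> borel_measurable lborel"
    and K_sq: "set_integrable lborel ({a..b} \<times> {a..b}) (\<lambda>(x, y). (K x y)\<^sup>2)"
    and K_sym: "\<And>x y. K x y = K y x"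
    and A_inj: "\<And>f. f \<in> L2 a b \<Longrightarrow> ae_eq_on a b (kernel_op K a b f) (\<lambda>x. 0)
                  \<Longrightarrow> ae_eq_on a b f (\<lambda>x. 0)"
    and psi_L2: "\<And>k. \<psi> k \<in> L2 a b"
    and psi_orth: "\<And>i j. l2ip a b (\<psi> i) (\<psi> j) = (if i = j then 1 else 0)"
    and psi_total: "\<And>f. f \<in> L2 a b \<Longrightarrow> (\<forall>k. l2ip a b f (\<psi> k) = 0) \<Longrightarrow> ae_eq_on a b f (\<lambda>x. 0)"
    and psi_eigen: "\<And>k. ae_eq_on a b (kernel_op K a b (\<psi> k)) (\<lambda>x. lam k * \<psi> k x)"
    and lam_decr: "\<And>k. lam (Suc k) < lam k"
    and lam_lim: "lam \<longlonglongrightarrow> 0"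
    and M_prob: "prob_space M"
    and xi_gauss: "gaussian_weak_rv M a b \<xi>"
    and R_L2: "\<And>u. u \<in> L2 a b \<Longrightarrow> R u \<in> L2 a b"
    and R_cov: "\<And>u v. u \<in> L2 a b \<Longrightarrow> v \<in> L2 a b \<Longrightarrow>
                  l2ip a b (R u) v = integral\<^sup>L M (\<lambda>\<omega>. \<xi> u \<omega> * \<xi> v \<omega>)"
    and N_L2: "\<And>u. u \<in> L2 a b \<Longrightarrow> N u \<in> L2 a b"
    and N_linear: "\<And>u v c d. u \<in> L2 a b \<Longrightarrow> v \<in> L2 a b \<Longrightarrow>
                  ae_eq_on a b (N (\<lambda>x. c * u x + d * v x)) (\<lambda>x. c * N u x + d * N v x)"
    and N_bounded: "\<exists>C. \<forall>u\<in>L2 a b. l2ip a b (N u) (N u) \<le> C * l2ip a b u u"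
    and N_pos: "\<And>u. u \<in> L2 a b \<Longrightarrow> l2ip a b (N u) u \<ge> 0"
    and N_inj: "\<And>u. u \<in> L2 a b \<Longrightarrow> ae_eq_on a b (N u) (\<lambda>x. 0) \<Longrightarrow> ae_eq_on a b u (\<lambda>x. 0)"
    and nu_pos: "\<And>k. l2ip a b (N (\<psi> k)) (\<psi> k) > 0"
    and zeta_gauss: "\<And>\<epsilon>. \<epsilon> > 0 \<Longrightarrow> gaussian_weak_rv M a b (\<zeta> \<epsilon>)"
    and zeta_uncorr: "\<And>\<epsilon> u v. \<epsilon> > 0 \<Longrightarrow> u \<in> L2 a b \<Longrightarrow> v \<in> L2 a b \<Longrightarrow>
                  integral\<^sup>L M (\<lambda>\<omega>. \<xi> u \<omega> * \<zeta> \<epsilon> v \<omega>) = 0"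
    and zeta_cov: "\<And>\<epsilon> u v. \<epsilon> > 0 \<Longrightarrow> u \<in> L2 a b \<Longrightarrow> v \<in> L2 a b \<Longrightarrow>
                  integral\<^sup>L M (\<lambda>\<omega>. \<zeta> \<epsilon> u \<omega> * \<zeta> \<epsilon> v \<omega>) = \<epsilon>\<^sup>2 * l2ip a b (N u) v"
    and R_trace: "summable (\<lambda>k. l2ip a b (R (\<psi> k)) (\<psi> k))"
    and I_finite: "\<And>\<epsilon>. \<epsilon> > 0 \<Longrightarrow>
                  finite {k. lam k * sqrt (l2ip a b (R (\<psi> k)) (\<psi> k))
                             \<ge> \<epsilon> * sqrt (l2ip a b (N (\<psi> k)) (\<psi> k))}"
  shows "((\<lambda>\<epsilon>. mean_sq_norm M \<psi>
            (\<lambda>v \<omega>. \<xi> v \<omega>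
               - (\<Sum>k\<in>{k. lam k * sqrt (l2ip a b (R (\<psi> k)) (\<psi> k))
                             \<ge> \<epsilon> * sqrt (l2ip a b (N (\<psi> k)) (\<psi> k))}.
                    (\<xi> (kernel_op (\<lambda>x y. K y x) a b (\<psi> k)) \<omega> + \<zeta> \<epsilon> (\<psi> k) \<omega>)
                    * l2ip a b (\<psi> k) v / lam k)))
          \<longlongrightarrow> 0) (at_right 0)"
  proof -
  have Ksym: "(\<lambda>x y. K y x) = K" using K_sym by (intro ext) simp
  interpret P: prob_space M by (rule M_prob)
  define \<rho>2 where "\<rho>2 k = l2ip a b (R (\<psi> k)) (\<psi> k)" for k
  define \<nu>2 where "\<nu>2 k = l2ip a b (N (\<psi> k)) (\<psi> k)" for k
  define I where "I \<epsilon> = {k. lam k * sqrt (\<rho>2 k) \<ge> \<epsilon> * sqrt (\<nu>2 k)}" for \<epsilon>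
  have Ieq: "{k. lam k * sqrt (l2ip a b (R (\<psi> k)) (\<psi> k)) \<ge> \<epsilon> * sqrt (l2ip a b (N (\<psi> k)) (\<psi> k))} = I \<epsilon>" for \<epsilon>
    by (simp add: I_def \<rho>2_def \<nu>2_def)
  have xi_int: "integrable M (\<lambda>\<omega>. (\<xi> v \<omega>)\<^sup>2)" if "v \<in> L2 a b" for v
    using cg_sq_integrable xi_gauss that unfolding gaussian_weak_rv_def by blast
  have xi_E: "integral\<^sup>L M (\<lambda>\<omega>. (\<xi> v \<omega>)\<^sup>2) = l2ip a b (R v) v" if "v \<in> L2 a b" for v
    using R_cov[OF that that] by (simp add: power2_eq_square)
  have zeta_int: "integrable M (\<lambda>\<omega>. (\<zeta> \<epsilon> v \<omega>)\<^sup>2)" if "\<epsilon> > 0" "v \<in> L2 a b" for \<epsilon> v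
    using cg_sq_integrable zeta_gauss[OF that(1)] that(2) unfolding gaussian_weak_rv_def by blast
  have zeta_E: "integral\<^sup>L M (\<lambda>\<omega>. (\<zeta> \<epsilon> v \<omega>)\<^sup>2) = \<epsilon>\<^sup>2 * l2ip a b (N v) v" if "\<epsilon> > 0" "v \<in> L2 a b" for \<epsilon> v
    using zeta_cov[OF that(1) that(2) that(2)] by (simp add: power2_eq_square)
  have rho_nn: "\<rho>2 k \<ge> 0" for k
  proof -
    have "0 \<le> integral\<^sup>L M (\<lambda>\<omega>. (\<xi> (\<psi> k) \<omega>)\<^sup>2)" by (intro integral_nonneg_AE) simp
    then show ?thesis using xi_E[OF psi_L2[of k]] unfolding \<rho>2_def by simp
  qed
  have nu_pos': "\<nu>2 k > 0" for k using nu_pos unfolding \<nu>2_def by simp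
  have lam_pos: "lam k > 0" for k
  proof -
    have "decseq lam" using lam_decr by (intro decseq_SucI) (simp add: less_imp_le)
    then have "0 \<le> lam (Suc k)" using decseq_ge lam_lim by blast
    then show ?thesis using lam_decr[of k] by simp
  qed
  have psi_m[measurable]: "\<psi> k \<in> borel_measurable lborel" for k using psi_L2 unfolding L2_def by blast
  define kop where "kop k = kernel_op K a b (\<psi> k)" for k
  have kop_m[measurable]: "kop k \<in> borel_measurable lborel" for k
    unfolding kop_def by (rule kop_meas[OF K_meas psi_m])
  have lampsi_L2: "(\<lambda>x. lam k * \<psi> k x) \<in> L2 a b" for k
  proof -
    have "set_integrable lborel {a..b} (\<lambda>x. (\<psi> k x)\<^sup>2)" using psi_L2[of k] unfolding L2_def by blast
    then have "set_integrable lborel {a..b} (\<lambda>x. (lam k)\<^sup>2 * (\<psi> k x)\<^sup>2)"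
      by (rule set_integrable_mult_right)
    then show ?thesis unfolding L2_def by (simp add: power_mult_distrib)
  qed
  have kop_L2: "kop k \<in> L2 a b" for k
    using L2_cong[OF kop_m _ lampsi_L2] psi_eigen unfolding kop_def by blast
  have xi_zero: "AE \<omega> in M. \<xi> w \<omega> = 0" if "w \<in> L2 a b" "ae_eq_on a b w (\<lambda>x. 0)" for w
  proof -
    have wm[measurable]: "w \<in> borel_measurable lborel" using that(1) unfolding L2_def by blast
    have Rm[measurable]: "R w \<in> borel_measurable lborel" using R_L2[OF that(1)] unfolding L2_def by blast
    have "l2ip a b (R w) w = (LINT x:{a..b}|lborel. 0)"
      unfolding l2ip_def
      by (rule set_lebesgue_integral_cong_AE) (use that(2) in \<open>auto simp: ae_eq_on_def elim!: eventually_mono\<close>)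
    then have "l2ip a b (R w) w = 0" by simp
    then show ?thesis using sq_zero_AE[OF xi_int[OF that(1)]] xi_E[OF that(1)] by simp
  qed
  have xi_kop: "AE \<omega> in M. \<xi> (kop k) \<omega> = lam k * \<xi> (\<psi> k) \<omega>" for k
  proof -
    define w where "w = (\<lambda>x. 1 * kop k x + (- lam k) * \<psi> k x)"
    have wm: "w \<in> borel_measurable lborel" unfolding w_def by measurable
    have we: "ae_eq_on a b w (\<lambda>x. 0)"
      using psi_eigen[of k] unfolding w_def kop_def ae_eq_on_def by (auto elim!: eventually_mono)
    have wL2: "w \<in> L2 a b" by (rule L2_cong[OF wm we zero_L2])
    have lin: "AE \<omega> in M. \<xi> w \<omega> = 1 * \<xi> (kop k) \<omega> + (- lam k) * \<xi> (\<psi> k) \<omega>"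
      using xi_gauss kop_L2[of k] psi_L2[of k] unfolding gaussian_weak_rv_def w_def by blast
    show ?thesis using lin xi_zero[OF wL2 we] by eventually_elim simp
  qed
  define f where "f \<epsilon> j = (if j \<in> I \<epsilon> then \<epsilon>\<^sup>2 * \<nu>2 j / (lam j)\<^sup>2 else \<rho>2 j)" for \<epsilon> j
  define G where "G \<epsilon> = mean_sq_norm M \<psi> (\<lambda>v \<omega>. \<xi> v \<omega>
               - (\<Sum>k\<in>I \<epsilon>. (\<xi> (kop k) \<omega> + \<zeta> \<epsilon> (\<psi> k) \<omega>) * l2ip a b (\<psi> k) v / lam k))" for \<epsilon>
  have term_eq: "(\<integral>\<^sup>+ \<omega>. ennreal ((\<xi> (\<psi> j) \<omega>
               - (\<Sum>k\<in>I \<epsilon>. (\<xi> (kop k) \<omega> + \<zeta> \<epsilon> (\<psi> k) \<omega>) * l2ip a b (\<psi> k) (\<psi> j) / lam k))\<^sup>2) \<partial>M)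
       = ennreal (f \<epsilon> j)" if ep: "\<epsilon> > 0" for \<epsilon> j
  proof -
    have fin: "finite (I \<epsilon>)" using I_finite[OF ep] Ieq by simp
    have s: "(\<Sum>k\<in>I \<epsilon>. (\<xi> (kop k) \<omega> + \<zeta> \<epsilon> (\<psi> k) \<omega>) * l2ip a b (\<psi> k) (\<psi> j) / lam k)
       = (if j \<in> I \<epsilon> then (\<xi> (kop j) \<omega> + \<zeta> \<epsilon> (\<psi> j) \<omega>) / lam j else 0)" for \<omega>
      unfolding psi_orth by (rule sum_delta_helper[OF fin])
    show ?thesis
    proof (cases "j \<in> I \<epsilon>")
      case False
      then show ?thesis unfolding s f_def
        using nn_integral_eq_integral[OF xi_int[OF psi_L2[of j]]] xi_E[OF psi_L2[of j]]
        by (simp add: \<rho>2_def)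
    next
      case True
      have "(\<integral>\<^sup>+ \<omega>. ennreal ((\<xi> (\<psi> j) \<omega> - (\<xi> (kop j) \<omega> + \<zeta> \<epsilon> (\<psi> j) \<omega>) / lam j)\<^sup>2) \<partial>M)
          = (\<integral>\<^sup>+ \<omega>. ennreal ((\<zeta> \<epsilon> (\<psi> j) \<omega>)\<^sup>2 / (lam j)\<^sup>2) \<partial>M)"
      proof (rule nn_integral_cong_AE)
        show "AE \<omega> in M. ennreal ((\<xi> (\<psi> j) \<omega> - (\<xi> (kop j) \<omega> + \<zeta> \<epsilon> (\<psi> j) \<omega>) / lam j)\<^sup>2)
             = ennreal ((\<zeta> \<epsilon> (\<psi> j) \<omega>)\<^sup>2 / (lam j)\<^sup>2)"
          using xi_kop[of j]
        proof eventually_elim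
          case (elim \<omega>)
          have "\<xi> (\<psi> j) \<omega> - (\<xi> (kop j) \<omega> + \<zeta> \<epsilon> (\<psi> j) \<omega>) / lam j = - (\<zeta> \<epsilon> (\<psi> j) \<omega> / lam j)"
            using elim lam_pos[of j] by (simp add: field_simps)
          then show ?case by (simp add: power_divide)
        qed
      qed
      also have "\<dots> = ennreal (integral\<^sup>L M (\<lambda>\<omega>. (\<zeta> \<epsilon> (\<psi> j) \<omega>)\<^sup>2 / (lam j)\<^sup>2))"
        by (rule nn_integral_eq_integral) (use zeta_int[OF ep psi_L2[of j]] in auto)
      also have "\<dots> = ennreal (f \<epsilon> j)"
        using zeta_E[OF ep psi_L2[of j]] True unfolding f_def \<nu>2_def by simp
      finally show ?thesis unfolding s using True by simp
    qed
  qed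
  have bound: "0 \<le> f \<epsilon> j \<and> f \<epsilon> j \<le> \<rho>2 j" if "\<epsilon> > 0" for \<epsilon> j
  proof (cases "j \<in> I \<epsilon>")
    case True
    then have h: "\<epsilon> * sqrt (\<nu>2 j) \<le> lam j * sqrt (\<rho>2 j)" unfolding I_def by simp
    have "(\<epsilon> * sqrt (\<nu>2 j))\<^sup>2 \<le> (lam j * sqrt (\<rho>2 j))\<^sup>2"
      by (rule power_mono[OF h]) (use that nu_pos'[of j] in simp)
    then have "\<epsilon>\<^sup>2 * \<nu>2 j \<le> (lam j)\<^sup>2 * \<rho>2 j"
      using rho_nn[of j] nu_pos'[of j] by (simp add: power_mult_distrib less_imp_le)
    then show ?thesis using True lam_pos[of j] that nu_pos'[of j]
      unfolding f_def by (simp add: divide_le_eq mult.commute)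
  next
    case False then show ?thesis unfolding f_def using rho_nn by simp
  qed
  have lim_j: "((\<lambda>\<epsilon>. f \<epsilon> j) \<longlongrightarrow> 0) (at_right 0)" for j
  proof -
    define C where "C = \<nu>2 j / (lam j)\<^sup>2"
    have ev: "eventually (\<lambda>\<epsilon>. f \<epsilon> j \<le> \<epsilon>\<^sup>2 * C) (at_right 0)"
    proof (cases "\<rho>2 j = 0")
      case True
      have "f \<epsilon> j \<le> \<epsilon>\<^sup>2 * C" if "\<epsilon> > 0" for \<epsilon>
        unfolding f_def C_def using True nu_pos'[of j] lam_pos[of j] by simp
      then show ?thesis using eventually_at_right_less[of "0::real"] by (auto elim: eventually_mono)
    next
      case False
      then have rp: "\<rho>2 j > 0" using rho_nn[of j] by simp
      define \<delta> where "\<delta> = lam j * sqrt (\<rho>2 j) / sqrt (\<nu>2 j)"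
      have dp: "\<delta> > 0" unfolding \<delta>_def using rp lam_pos[of j] nu_pos'[of j] by simp
      have "eventually (\<lambda>\<epsilon>. \<epsilon> < \<delta>) (at_right 0)"
        using order_tendstoD(2)[OF tendsto_ident_at dp] .
      then show ?thesis
      proof eventually_elim
        case (elim \<epsilon>)
        have "\<epsilon> * sqrt (\<nu>2 j) \<le> lam j * sqrt (\<rho>2 j)"
          using elim nu_pos'[of j] unfolding \<delta>_def by (simp add: less_divide_eq)
        then have "j \<in> I \<epsilon>" unfolding I_def by simp
        then show ?case unfolding f_def C_def by simp
      qed
    qed
    have ev0: "eventually (\<lambda>\<epsilon>. 0 \<le> f \<epsilon> j) (at_right 0)"
      using eventually_at_right_less[of "0::real"] bound by (auto elim: eventually_mono)
    have "((\<lambda>\<epsilon>. \<epsilon>\<^sup>2 * C) \<longlongrightarrow> 0\<^sup>2 * C) (at_right 0)"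
      by (intro tendsto_intros)
    then have t: "((\<lambda>\<epsilon>. \<epsilon>\<^sup>2 * C) \<longlongrightarrow> 0) (at_right (0::real))" by simp
    show ?thesis by (rule tendsto_sandwich[OF ev0 ev tendsto_const t])
  qed
  have sumR: "summable \<rho>2" using R_trace unfolding \<rho>2_def .
  have tan: "((\<lambda>\<epsilon>. suminf (\<lambda>j. f \<epsilon> j)) \<longlongrightarrow> suminf (\<lambda>j. 0::real)) (at_right 0)"
  proof -
    have "eventually (\<lambda>x. (\<lambda>k. True) (fst x) \<and> (\<lambda>\<epsilon>. \<epsilon> > (0::real)) (snd x)) (at_top \<times>\<^sub>F at_right 0)"
      by (rule eventually_prodI) (auto simp: eventually_at_right_less)
    then have b: "eventually (\<lambda>(k,n). norm (f n k) \<le> \<rho>2 k) (at_top \<times>\<^sub>F at_right 0)"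
      by (rule eventually_mono) (use bound in auto)
    show ?thesis using tannerys_theorem[OF lim_j b sumR] by simp
  qed
  have "eventually (\<lambda>\<epsilon>. ennreal (suminf (f \<epsilon>)) = G \<epsilon>) (at_right 0)"
    using eventually_at_right_less[of "0::real"]
  proof eventually_elim
    case (elim \<epsilon>)
    have sf: "summable (f \<epsilon>)"
      by (rule summable_comparison_test[OF _ sumR]) (use bound[OF elim] in auto)
    have "G \<epsilon> = (\<Sum>j. ennreal (f \<epsilon> j))"
      unfolding G_def mean_sq_norm_def using term_eq[OF elim] by simp
    also have "\<dots> = ennreal (suminf (f \<epsilon>))"
      by (rule suminf_ennreal2) (use bound[OF elim] sf in auto)
    finally show ?case by simp
  qed
  moreover have "((\<lambda>\<epsilon>. ennreal (suminf (f \<epsilon>))) \<longlongrightarrow> ennreal 0) (at_right 0)"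
    using tendsto_ennrealI[OF tan] by simp
  ultimately have "(G \<longlongrightarrow> 0) (at_right 0)"
    by (simp add: tendsto_cong)
  then show ?thesis unfolding Ieq Ksym kop_def[symmetric] G_def .
qed


end
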